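(* Let $C_{SR}>C_{SD}=b=\log(1+m)>0$ (with $m>0$) and $c>0$. Let $J$ be either $J_{IA}(\alpha_2,\alpha_3)=b+\log(1+c\alpha_2/\alpha_3)$ or $J_{EA}(\alpha_2,\alpha_3)=\log(1+m+c\alpha_2/\alpha_3)$, with $\alpha_3J:=0$ when $\alpha_3=0$. On the simplex $\Delta=\{(\alpha_1,\alpha_2,\alpha_3)\in[0,1]^3:\alpha_1+\alpha_2+\alpha_3=1\}$ define $$R^{(TS)}(\alpha_1,\alpha_2,\alpha_3)=\min\{\alpha_1C_{SR},\ (\alpha_1+\alpha_2)C_{SD}+\alpha_3J(\alpha_2,\alpha_3)\}.$$ Then every maximizer $(\alpha_1^*,\alpha_2^*,\alpha_3^* )$ of $R^{(TS)}$ over $\Delta$ satisfies $$\alpha_1^*C_{SR}=(\alpha_1^*+\alpha_2^* )C_{SD}+\alpha_3^*J(\alpha_2^*,\alpha_3^* ).$$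
   Context: $\log$ is the natural logarithm. This concerns the time-switching relay protocol: $\alpha_1,\alpha_2,\alpha_3$ are the time fractions of the relay's listening sub-phase, energy-harvesting sub-phase and collaboration phase; in the paper's setting $C_{SR}=\log(1+P_SH_{SR}/\sigma_R^2)$, $C_{SD}=\log(1+P_SH_{SD}/\sigma_D^2)$, $m=P_SH_{SD}/\sigma_D^2$, $c=\eta H_{SR}H_{RD}P_S/\sigma_D^2$. IA = mutual-information accumulation, EA = energy accumulation at the destination. *)

theory Defs
  imports Complex_Main
begin

definition J_IA :: "real \<Rightarrow> real \<Rightarrow> real \<Rightarrow> real \<Rightarrow> real" where
  "J_IA b c a2 a3 = b + ln (1 + c * a2 / a3)"

definition J_EA :: "real \<Rightarrow> real \<Rightarrow> real \<Rightarrow> real \<Rightarrow> real" where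
  "J_EA m c a2 a3 = ln (1 + m + c * a2 / a3)"

definition weighted_J :: "(real \<Rightarrow> real \<Rightarrow> real) \<Rightarrow> real \<Rightarrow> real \<Rightarrow> real" where
  "weighted_J J a2 a3 = (if a3 = 0 then 0 else a3 * J a2 a3)"

definition simplex3 :: "(real \<times> real \<times> real) set" where
  "simplex3 = {(a1, a2, a3). 0 \<le> a1 \<and> a1 \<le> 1 \<and> 0 \<le> a2 \<and> a2 \<le> 1 \<and> 0 \<le> a3 \<and> a3 \<le> 1
                  \<and> a1 + a2 + a3 = 1}"

definition R_TS :: "real \<Rightarrow> real \<Rightarrow> (real \<Rightarrow> real \<Rightarrow> real) \<Rightarrow> real \<Rightarrow> real \<Rightarrow> real \<Rightarrow> real" where
  "R_TS CSR CSD J a1 a2 a3 = min (a1 * CSR) ((a1 + a2) * CSD + weighted_J J a2 a3)"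

end

theory Submission
  imports Defs
begin

lemma Jfacts:
  fixes b m c :: real and J :: "real \<Rightarrow> real \<Rightarrow> real"
  assumes "m > 0" "c > 0" "b = ln (1 + m)" "J = J_IA b c \<or> J = J_EA m c"
  shows L1: "\<And>x y. y > 0 \<Longrightarrow> x \<ge> 0 \<Longrightarrow> J x y \<ge> b"
    and L2: "\<And>y. y > 0 \<Longrightarrow> J 0 y = b"
    and L3: "\<And>x y e. y > 0 \<Longrightarrow> 0 \<le> e \<Longrightarrow> e \<le> x \<Longrightarrow> y * J (x - e) y \<ge> y * J x y - c * e"
    and L4: "\<And>x y e. y > 0 \<Longrightarrow> x \<ge> 0 \<Longrightarrow> e > 0 \<Longrightarrow> J (x + e) y > J x y"
    and L5: "\<And>x e. e > 0 \<Longrightarrow> x \<ge> 0 \<Longrightarrow> J (x + e) e > b"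
proof -
  have lnd: "ln v - ln u \<le> (v - u)" if "u \<ge> 1" "v \<ge> u" for u v :: real
  proof -
    have "ln (v/u) \<le> v/u - 1" using that by (intro ln_le_minus_one) auto
    also have "v/u - 1 = (v - u)/u" using that by (simp add: field_simps)
    also have "\<dots> \<le> v - u" using that by (simp add: divide_le_eq mult_le_cancel_left1)
    finally show ?thesis using that by (simp add: ln_div)
  qed
  {
    fix x y :: real assume y: "y > 0" and x: "x \<ge> 0"
    have q: "c * x / y \<ge> 0" using x y assms(2) by simp
    show "J x y \<ge> b" using assms(4)
    proof
      assume "J = J_IA b c" thus ?thesis using q by (simp add: J_IA_def)
    next
      assume "J = J_EA m c" thus ?thesis using q assms(1,3) by (simp add: J_EA_def)
    qed
  }
  { fix y :: real assume "y > 0"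
    show "J 0 y = b" using assms(4,3) by (auto simp: J_IA_def J_EA_def) }
  {
    fix x y e :: real assume y: "y > 0" and e: "0 \<le> e" "e \<le> x"
    have q: "c * (x - e) / y \<ge> 0" using e y assms(2) by simp
    have q2: "c * x / y - c * (x - e) / y = c * e / y" by (simp add: diff_divide_distrib[symmetric] right_diff_distrib)
    have q3: "c * (x - e) / y \<le> c * x / y" using e y assms(2) by (simp add: divide_right_mono)
    have key: "J x y - J (x - e) y \<le> c * e / y" using assms(4)
    proof
      assume "J = J_IA b c"
      thus ?thesis using lnd[of "1 + c * (x - e) / y" "1 + c * x / y"] q q2 q3 by (simp add: J_IA_def)
    next
      assume "J = J_EA m c"
      thus ?thesis using lnd[of "1 + m + c * (x - e) / y" "1 + m + c * x / y"] q q2 q3 assms(1)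
        by (simp add: J_EA_def)
    qed
    have "y * (J x y - J (x - e) y) \<le> y * (c * e / y)" using key y by (intro mult_left_mono) auto
    also have "y * (c * e / y) = c * e" using y by simp
    finally have "y * (J x y - J (x - e) y) \<le> c * e" .
    thus "y * J (x - e) y \<ge> y * J x y - c * e" using y by (simp add: algebra_simps)
  }
  {
    fix x y e :: real assume y: "y > 0" and x: "x \<ge> 0" and e: "e > 0"
    have q: "c * x / y \<ge> 0" using x y assms(2) by simp
    have q3: "c * x / y < c * (x + e) / y" using e y assms(2) by (simp add: divide_strict_right_mono)
    show "J (x + e) y > J x y" using assms(4)
    proof
      assume "J = J_IA b c" thus ?thesis using q q3 by (simp add: J_IA_def)
    next
      assume "J = J_EA m c" thus ?thesis using q q3 assms(1) by (simp add: J_EA_def)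
    qed
  }
  {
    fix x e :: real assume e: "e > 0" and x: "x \<ge> 0"
    have q: "c * (x + e) / e > 0" using x e assms(2) by simp
    show "J (x + e) e > b" using assms(4)
    proof
      assume "J = J_IA b c" thus ?thesis using q by (simp add: J_IA_def)
    next
      assume "J = J_EA m c" thus ?thesis using q assms(1,3) by (simp add: J_EA_def)
    qed
  }
qed

theorem lemma4:
  fixes CSR CSD b m c :: real and J :: "real \<Rightarrow> real \<Rightarrow> real"
    and a1 a2 a3 :: real
  assumes "m > 0" and "c > 0"
    and "b = ln (1 + m)" and "CSD = b" and "CSR > CSD"
    and "J = J_IA b c \<or> J = J_EA m c"
    and "(a1, a2, a3) \<in> simplex3"
    and "\<forall>(x1, x2, x3) \<in> simplex3. R_TS CSR CSD J x1 x2 x3 \<le> R_TS CSR CSD J a1 a2 a3"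
  shows "a1 * CSR = (a1 + a2) * CSD + weighted_J J a2 a3"
proof (rule ccontr)
  assume ne: "a1 * CSR \<noteq> (a1 + a2) * CSD + weighted_J J a2 a3"
  note JF = Jfacts[OF assms(1,2,3,6)]
  define F where "F = a1 * CSR"
  define G where "G = (a1 + a2) * CSD + weighted_J J a2 a3"
  have opt: "\<And>x1 x2 x3. (x1, x2, x3) \<in> simplex3 \<Longrightarrow> min (x1 * CSR) ((x1 + x2) * CSD + weighted_J J x2 x3) \<le> min F G"
    using assms(8) unfolding F_def G_def R_TS_def by fastforce
  have s: "0 \<le> a1" "a1 \<le> 1" "0 \<le> a2" "a2 \<le> 1" "0 \<le> a3" "a3 \<le> 1" "a1 + a2 + a3 = 1"
    using assms(7) by (auto simp: simplex3_def)
  have b0: "b > 0" using assms(1,3) by simp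
  have C0: "CSR > b" using assms(4,5) by simp
  have Rb: "min F G \<ge> b"
  proof -
    have "(b / CSR, 1 - b / CSR, 0) \<in> simplex3" using b0 C0
      by (auto simp: simplex3_def divide_le_eq)
    from opt[OF this] show ?thesis using b0 C0 assms(4) by (simp add: weighted_J_def)
  qed
  have Gb: "G \<ge> b"
  proof (cases "a3 = 0")
    case True thus ?thesis using s assms(4) by (simp add: G_def weighted_J_def)
  next
    case False
    hence "a3 > 0" using s by simp
    hence "a3 * J a2 a3 \<ge> a3 * b" using JF(1)[of a3 a2] s by (simp add: mult_left_mono)
    moreover have "(a1 + a2) * b + a3 * b = b" using s by (metis distrib_right mult_1)
    ultimately show ?thesis using False assms(4) by (simp add: G_def weighted_J_def)
  qed
  have "F < G \<or> F > G" using ne F_def G_def by auto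
  thus False
  proof
    assume FG: "F < G"
    have a3p: "a3 > 0"
    proof (rule ccontr)
      assume "\<not> a3 > 0" hence "a3 = 0" using s by simp
      hence "G = b" using s assms(4) by (simp add: G_def weighted_J_def)
      thus False using FG Rb by linarith
    qed
    have a2p: "a2 > 0"
    proof (rule ccontr)
      assume "\<not> a2 > 0" hence "a2 = 0" using s by simp
      hence "G = b" using s assms(4) a3p JF(2)[OF a3p]
        by (simp add: G_def weighted_J_def) (metis distrib_right mult_1)
      thus False using FG Rb by linarith
    qed
    define e where "e = min a2 ((G - F) / (2 * c))"
    have e0: "e > 0" using a2p FG assms(2) by (simp add: e_def)
    have e1: "e \<le> a2" by (simp add: e_def)
    have e2: "c * e \<le> (G - F) / 2"
    proof -
      have "e \<le> (G - F) / (2 * c)" by (simp add: e_def)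
      hence "c * e \<le> c * ((G - F) / (2 * c))" using assms(2) by (intro mult_left_mono) auto
      also have "c * ((G - F) / (2 * c)) = (G - F) / 2" using assms(2) by simp
      finally show ?thesis .
    qed
    have "(a1 + e, a2 - e, a3) \<in> simplex3" using s e0 e1 by (auto simp: simplex3_def)
    from opt[OF this] have *: "min ((a1 + e) * CSR) ((a1 + e + (a2 - e)) * CSD + weighted_J J (a2 - e) a3) \<le> min F G" .
    have f': "(a1 + e) * CSR > F" using e0 C0 b0 by (simp add: F_def algebra_simps)
    have "a3 * J (a2 - e) a3 \<ge> a3 * J a2 a3 - c * e" using JF(3)[OF a3p] e0 e1 by simp
    hence "(a1 + e + (a2 - e)) * CSD + weighted_J J (a2 - e) a3 \<ge> G - c * e"
      using a3p by (simp add: G_def weighted_J_def)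
    moreover have "G - c * e > F" proof - have "2 * (c * e) \<le> G - F" using e2 by simp thus ?thesis using FG by linarith qed
    ultimately have "(a1 + e + (a2 - e)) * CSD + weighted_J J (a2 - e) a3 > F" by linarith
    thus False using * f' FG by linarith
  next
    assume FG: "F > G"
    show False
    proof (cases "a3 = 0")
      case False
      hence a3p: "a3 > 0" using s by simp
      have a1p: "a1 > 0"
      proof (rule ccontr)
        assume "\<not> a1 > 0" hence "a1 = 0" using s by simp
        thus False using FG Gb b0 by (simp add: F_def)
      qed
      have Cp: "CSR > 0" using C0 b0 by simp
      define e where "e = min a1 ((F - G) / (2 * CSR))"
      have e0: "e > 0" using a1p FG Cp by (simp add: e_def)
      have e1: "e \<le> a1" by (simp add: e_def)
      have e2: "e * CSR \<le> (F - G) / 2"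
      proof -
        have "e \<le> (F - G) / (2 * CSR)" by (simp add: e_def)
        hence "e * CSR \<le> ((F - G) / (2 * CSR)) * CSR" using Cp by (intro mult_right_mono) auto
        also have "((F - G) / (2 * CSR)) * CSR = (F - G) / 2" using Cp by simp
        finally show ?thesis .
      qed
      have "(a1 - e, a2 + e, a3) \<in> simplex3" using s e0 e1 by (auto simp: simplex3_def)
      from opt[OF this] have *: "min ((a1 - e) * CSR) ((a1 - e + (a2 + e)) * CSD + weighted_J J (a2 + e) a3) \<le> min F G" .
      have f': "(a1 - e) * CSR > G" using e2 FG by (simp add: F_def algebra_simps)
      have "J (a2 + e) a3 > J a2 a3" using JF(4)[OF a3p] s e0 by simp
      hence "a3 * J (a2 + e) a3 > a3 * J a2 a3" using a3p by simp
      hence "(a1 - e + (a2 + e)) * CSD + weighted_J J (a2 + e) a3 > G"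
        using a3p by (simp add: G_def weighted_J_def)
      thus False using * f' FG by linarith
    next
      case True
      hence G: "G = b" using s assms(4) by (simp add: G_def weighted_J_def)
      have a1p: "a1 > 0"
      proof (rule ccontr)
        assume "\<not> a1 > 0" hence "a1 = 0" using s by simp
        thus False using FG Gb b0 by (simp add: F_def)
      qed
      have Cp: "CSR > 0" using C0 b0 by simp
      define e where "e = min (a1 / 2) ((F - G) / (4 * CSR))"
      have e0: "e > 0" using a1p FG Cp by (simp add: e_def)
      have e1: "2 * e \<le> a1" by (simp add: e_def)
      have e2: "2 * e * CSR \<le> (F - G) / 2"
      proof -
        have "e \<le> (F - G) / (4 * CSR)" by (simp add: e_def)
        hence "e * CSR \<le> ((F - G) / (4 * CSR)) * CSR" using Cp by (intro mult_right_mono) auto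
        also have "((F - G) / (4 * CSR)) * CSR = (F - G) / 4" using Cp by simp
        finally show ?thesis by simp
      qed
      have "(a1 - 2 * e, a2 + e, e) \<in> simplex3" using s e0 e1 True by (auto simp: simplex3_def)
      from opt[OF this] have *: "min ((a1 - 2 * e) * CSR) ((a1 - 2 * e + (a2 + e)) * CSD + weighted_J J (a2 + e) e) \<le> min F G" .
      have f': "(a1 - 2 * e) * CSR > G" using e2 FG by (simp add: F_def algebra_simps)
      have "J (a2 + e) e > b" using JF(5)[OF e0] s by simp
      hence "e * J (a2 + e) e > e * b" using e0 by simp
      moreover have "(a1 - 2 * e + (a2 + e)) * b = b - e * b" using s True by (simp add: algebra_simps)
      ultimately have "(a1 - 2 * e + (a2 + e)) * CSD + weighted_J J (a2 + e) e > G"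
        using e0 G assms(4) by (simp add: weighted_J_def)
      thus False using * f' FG by linarith
    qed
  qed
qed

end
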